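(* Let $\lambda=2$, $c_0=\ln 4$, $c_2=2^{-26/9}$, and let $F:\mathbb{R}^2\to\mathbb{R}^2$ be $$F(a,b)=\big(-2a-e(a,b),\; b+c_0+e(a,b)\big),\qquad e(a,b)=\ln\!\big(1+c_2e^{-(4a+b)/3}\big).$$ Let $\gamma^{inv}:[2.56,\infty)\to[-0.03,0.03]$ be the $F$-invariant curve described in the context. Let $I$ be the line segment $\{(t,\,2t-\tfrac{2}{3}\ln 2^2): -0.4\le t\le 0\}$ in the $(a,b)$-plane. Then $F^3(I)$ intersects the graph $\{(\gamma^{inv}(b),b): b\ge 2.56\}$ of $\gamma^{inv}$ transversally.
   Context: Set $X=[-0.03,0.03]\times[2.56,\infty)$ in the $(a,b)$-plane, and let $\Gamma$ be the set of functions $\gamma:[2.56,\infty)\to[-0.03,0.03]$ with Lipschitz constant at most $1$; the graph of $\gamma$ is $\{(\gamma(b),b)\}\subset X$. The map $F$ is injective, $F^{-1}$ is defined on $X$, and for $\gamma\in\Gamma$ the set $F^{-1}(\text{graph }\gamma)\cap X$ is again the graph of an element $T\gamma\in\Gamma$; $T$ is a contraction of $\Gamma$ in the sup metric, and $\gamma^{inv}$ denotes its unique fixed point, i.e. the unique $\gamma\in\Gamma$ with $F^{-1}(\text{graph }\gamma)\cap X=\text{graph }\gamma$. (The map $F$ is the recursion $(x,y)\mapsto(y,1+\lambda^2x^2/y)$ written in the coordinates $u=\ln x$, $v=\ln y$, $a=u-v+c_0/3$, $b=2u+v$.) *)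

theory Defs
  imports "HOL-Analysis.Analysis"
begin

definition c0 :: real where "c0 = ln 4"
definition c2 :: real where "c2 = 2 powr (-26/9)"

definition eF :: "real \<Rightarrow> real \<Rightarrow> real" where
  "eF a b = ln (1 + c2 * exp (-(4*a + b)/3))"

definition F :: "real \<times> real \<Rightarrow> real \<times> real" where
  "F p = (case p of (a, b) \<Rightarrow> (-2*a - eF a b, b + c0 + eF a b))"

definition Xset :: "(real \<times> real) set" where
  "Xset = {(a, b). -0.03 \<le> a \<and> a \<le> 0.03 \<and> 2.56 \<le> b}"

text \<open>Gamma: functions [2.56,inf) -> [-0.03,0.03] with Lipschitz constant at most 1
  (only values on [2.56,inf) matter).\<close>
definition Gam :: "(real \<Rightarrow> real) set" where
  "Gam = {\<gamma>. (\<forall>b\<ge>2.56. -0.03 \<le> \<gamma> b \<and> \<gamma> b \<le> 0.03) \<and>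
              (\<forall>b1\<ge>2.56. \<forall>b2\<ge>2.56. \<bar>\<gamma> b1 - \<gamma> b2\<bar> \<le> \<bar>b1 - b2\<bar>)}"

definition graph :: "(real \<Rightarrow> real) \<Rightarrow> (real \<times> real) set" where
  "graph \<gamma> = {(\<gamma> b, b) | b. 2.56 \<le> b}"

definition graph_inv :: "(real \<times> real) set" where
  "graph_inv = (THE G. \<exists>\<gamma>\<in>Gam. G = graph \<gamma> \<and> {p \<in> Xset. F p \<in> G} = G)"

definition segI :: "real \<Rightarrow> real \<times> real" where
  "segI t = (t, 2*t - (2/3) * ln (2^2))"

end

theory Submission
  imports Defs
begin

definition xf :: "real \<Rightarrow> real \<Rightarrow> real" where
  "xf a b = c2 * exp (-(4*a+b)/3)"

definition qq :: real where "qq = exp (ln 2 / 9)"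

lemma qq9: "qq ^ 9 = 2"
proof -
  have "qq ^ 9 = exp (real 9 * (ln 2 / 9))" unfolding qq_def by (rule exp_of_nat_mult[symmetric])
  also have "\<dots> = 2" by simp
  finally show ?thesis .
qed

lemma qq_pos: "qq > 0" unfolding qq_def by simp

lemma qq_lo: "qq \<ge> 1.08"
proof (rule ccontr)
  assume "\<not> qq \<ge> 1.08"
  then have "qq ^ 9 < 1.08 ^ 9" using qq_pos by (intro power_strict_mono) auto
  then show False using qq9 by (simp add: power_divide)
qed

lemma qq_hi: "qq \<le> 1.0801"
proof (rule ccontr)
  assume "\<not> qq \<le> 1.0801"
  then have "1.0801 ^ 9 < qq ^ 9" by (intro power_strict_mono) auto
  then show False using qq9 by (simp add: power_divide)
qed

lemma exp_ln2_mult: "exp (real n * ln 2) = 2 ^ n"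
  by (simp add: exp_of_nat_mult)

lemma c2_eq: "c2 = qq / 8"
proof -
  have "c2 = exp (-26/9 * ln 2)" unfolding c2_def powr_def by simp
  moreover have "exp (-26/9 * ln 2) * exp (real 3 * ln 2) = qq"
    unfolding qq_def by (simp add: exp_add[symmetric])
  moreover have "exp (real 3 * ln 2) = 8" by (subst exp_ln2_mult) simp
  ultimately show ?thesis by simp
qed

lemma c0_eq: "c0 = 2 * ln 2"
  unfolding c0_def using ln_realpow[of 2 2] by simp

lemma c2_pos: "c2 > 0" unfolding c2_eq using qq_pos by simp

lemma xf_pos: "xf a b > 0" unfolding xf_def using c2_pos by simp

lemma eF_xf: "eF a b = ln (1 + xf a b)" unfolding eF_def xf_def by simp

lemma eF_nonneg: "eF a b \<ge> 0" unfolding eF_xf using xf_pos[of a b] by simp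

lemma F_simp: "F (a,b) = (-2*a - eF a b, b + c0 + eF a b)" unfolding F_def by simp

definition hf :: "real \<Rightarrow> real" where "hf u = ln (1 + c2 * exp (-u/3))"

lemma eF_hf: "eF a b = hf (4*a+b)" unfolding eF_def hf_def by simp

lemma exp_61_75: "exp (61/75::real) \<ge> 2.21"
proof -
  have "exp (61/75::real) = exp (61/1200) ^ 16"
    using exp_of_nat_mult[of 16 "61/1200::real"] by simp
  moreover have "(1 + 61/1200::real) ^ 16 \<le> exp (61/1200) ^ 16"
    by (intro power_mono exp_ge_add_one_self) auto
  moreover have "(2.21::real) \<le> (1 + 61/1200) ^ 16" by (simp add: power_divide)
  ultimately show ?thesis by linarith
qed

lemma xbound: assumes "2.44 \<le> u" shows "c2 * exp (-u/3) \<le> 0.0612"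
proof -
  have "exp (-u/3) \<le> exp (-(61/75))" using assms by simp
  also have "\<dots> = 1 / exp (61/75)" by (simp add: exp_minus field_simps)
  also have "\<dots> \<le> 1 / 2.21" using exp_61_75 by (intro divide_left_mono) auto
  finally have "exp (-u/3) \<le> 1/2.21" .
  then have "c2 * exp (-u/3) \<le> (1.0801/8) * (1/2.21)"
    using c2_eq qq_hi c2_pos by (intro mult_mono) auto
  then show ?thesis by simp
qed

lemma hf_lip_aux: assumes "2.44 \<le> u" "u \<le> v" shows "hf u - hf v \<le> 0.0204 * (v - u)" "hf v \<le> hf u"
proof -
  define x1 where "x1 = c2 * exp (-u/3)"
  define x2 where "x2 = c2 * exp (-v/3)"
  have x2pos: "x2 > 0" unfolding x2_def using c2_pos by simp
  have x1b: "x1 \<le> 0.0612" unfolding x1_def using xbound assms by simp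
  have "x2 = x1 * exp (-(v-u)/3)" unfolding x1_def x2_def by (simp add: exp_add[symmetric] field_simps)
  moreover have "exp (-(v-u)/3) \<ge> 1 - (v-u)/3" using exp_ge_add_one_self[of "-(v-u)/3"] by (simp add: algebra_simps diff_divide_distrib)
  moreover have x1pos: "x1 > 0" unfolding x1_def using c2_pos by simp
  ultimately have "x2 \<ge> x1 * (1 - (v-u)/3)" by (simp add: mult_left_mono)
  then have d: "x1 - x2 \<le> x1 * (v-u)/3" by (simp add: algebra_simps add_divide_distrib diff_divide_distrib)
  have "x2 \<le> x1" unfolding x1_def x2_def using assms c2_pos by simp
  have "ln (1+x1) - ln (1+x2) = ln ((1+x1)/(1+x2))" using x2pos x1pos by (simp add: ln_div)
  also have "\<dots> \<le> (1+x1)/(1+x2) - 1" using x2pos x1pos by (intro ln_le_minus_one) auto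
  also have "\<dots> = (x1-x2)/(1+x2)" using x2pos by (simp add: field_simps)
  also have "\<dots> \<le> x1 - x2" using x2pos \<open>x2 \<le> x1\<close> mult_left_mono[of 1 "1+x2" "x1-x2"] by (simp add: divide_le_eq)
  also have "\<dots> \<le> x1 * (v-u)/3" by (rule d)
  also have "\<dots> \<le> 0.0612 * (v-u)/3" using x1b assms by (intro divide_right_mono mult_right_mono) auto
  finally show "hf u - hf v \<le> 0.0204 * (v - u)" unfolding hf_def x1_def x2_def by simp
  show "hf v \<le> hf u" unfolding hf_def using \<open>x2 \<le> x1\<close> x2pos unfolding x1_def x2_def by simp
qed

lemma hf_lip: assumes "2.44 \<le> u" "2.44 \<le> v" shows "\<bar>hf u - hf v\<bar> \<le> 0.0204 * \<bar>u - v\<bar>"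
proof (cases "u \<le> v")
  case True then show ?thesis using hf_lip_aux[OF assms(1) True] by simp
next
  case False then show ?thesis using hf_lip_aux[OF assms(2), of u] by simp
qed

lemma X_u: "p \<in> Xset \<Longrightarrow> 2.44 \<le> 4 * fst p + snd p"
  unfolding Xset_def by auto

lemma F_fst: "fst (F p) = -2 * fst p - hf (4 * fst p + snd p)"
  by (cases p) (simp add: F_simp eF_hf)
lemma F_snd: "snd (F p) = snd p + c0 + hf (4 * fst p + snd p)"
  by (cases p) (simp add: F_simp eF_hf)

lemma cone_step:
  assumes p: "p \<in> Xset" and q: "q \<in> Xset" and s: "s = 1 \<or> s = -1"
    and pos: "0 < s*(fst q - fst p)" and cone: "\<bar>snd q - snd p\<bar> \<le> s*(fst q - fst p)"
  shows "(-s)*(fst (F q) - fst (F p)) \<ge> 3/2 * (s*(fst q - fst p))"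
    and "\<bar>snd (F q) - snd (F p)\<bar> \<le> (-s)*(fst (F q) - fst (F p))"
proof -
  define d where "d = s*(fst q - fst p)"
  define de where "de = hf (4 * fst q + snd q) - hf (4 * fst p + snd p)"
  have ad: "\<bar>fst q - fst p\<bar> = d" unfolding d_def using s pos by auto
  have h1: "\<bar>de\<bar> \<le> 0.0204 * \<bar>(4 * fst q + snd q) - (4 * fst p + snd p)\<bar>"
    unfolding de_def by (rule hf_lip[OF X_u[OF q] X_u[OF p]])
  have h2: "\<bar>(4 * fst q + snd q) - (4 * fst p + snd p)\<bar> \<le> 5 * d"
    using ad cone d_def by linarith
  have h3: "0.0204 * \<bar>(4 * fst q + snd q) - (4 * fst p + snd p)\<bar> \<le> 0.0204 * (5 * d)"
    using h2 by (intro mult_left_mono) auto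
  have ded: "\<bar>de\<bar> \<le> 51/500 * d" using h1 h3 by (simp; linarith)
  have e1: "(-s)*(fst (F q) - fst (F p)) = 2 * d + s * de"
    unfolding F_fst d_def de_def by (simp add: algebra_simps)
  have e2: "snd (F q) - snd (F p) = (snd q - snd p) + de"
    unfolding F_snd de_def by (simp add: algebra_simps)
  have "\<bar>s * de\<bar> = \<bar>de\<bar>" using s by auto
  then show "(-s)*(fst (F q) - fst (F p)) \<ge> 3/2 * (s*(fst q - fst p))"
    using e1 ded pos d_def by linarith
  show "\<bar>snd (F q) - snd (F p)\<bar> \<le> (-s)*(fst (F q) - fst (F p))"
    using e1 e2 ded cone d_def \<open>\<bar>s * de\<bar> = \<bar>de\<bar>\<close> pos by linarith
qed

lemma cone_iter:
  assumes "\<forall>k<n. (F^^k) p \<in> Xset \<and> (F^^k) q \<in> Xset" and s: "s = 1 \<or> s = -1"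
    and pos: "0 < s*(fst q - fst p)" and cone: "\<bar>snd q - snd p\<bar> \<le> s*(fst q - fst p)"
  shows "((-1)^n * s) * (fst ((F^^n) q) - fst ((F^^n) p)) \<ge> (3/2)^n * (s*(fst q - fst p))
       \<and> \<bar>snd ((F^^n) q) - snd ((F^^n) p)\<bar> \<le> ((-1)^n * s) * (fst ((F^^n) q) - fst ((F^^n) p))"
  using assms(1)
proof (induction n)
  case 0 then show ?case using cone by simp
next
  case (Suc n)
  then have IH: "((-1)^n * s) * (fst ((F^^n) q) - fst ((F^^n) p)) \<ge> (3/2)^n * (s*(fst q - fst p))"
    "\<bar>snd ((F^^n) q) - snd ((F^^n) p)\<bar> \<le> ((-1)^n * s) * (fst ((F^^n) q) - fst ((F^^n) p))" by auto
  have X: "(F^^n) p \<in> Xset" "(F^^n) q \<in> Xset" using Suc.prems by auto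
  have s': "(-1)^n * s = 1 \<or> (-1)^n * s = -1" using s by (cases "even n") auto
  have "0 < (3/2)^n * (s*(fst q - fst p))" using pos by simp
  then have pos': "0 < ((-1)^n * s) * (fst ((F^^n) q) - fst ((F^^n) p))" using IH(1) by linarith
  note st = cone_step[OF X s' pos' IH(2)]
  have "(3/2)^Suc n * (s*(fst q - fst p)) = 3/2 * ((3/2)^n * (s*(fst q - fst p)))" by simp
  also have "\<dots> \<le> 3/2 * (((-1)^n * s) * (fst ((F^^n) q) - fst ((F^^n) p)))" using IH(1) by linarith
  also have "\<dots> \<le> (-((-1)^n * s)) * (fst (F ((F^^n) q)) - fst (F ((F^^n) p)))" using st(1) .
  finally show ?case using st(2) by simp
qed

definition rho :: "real \<Rightarrow> real" where "rho b = 3/200 - eF (3/200) b / 2"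

lemma xf_X: assumes "(a,b) \<in> Xset" shows "xf a b \<le> 0.0612"
proof -
  have "2.44 \<le> 4*a+b" using X_u[OF assms] by simp
  from xbound[OF this] show ?thesis unfolding xf_def by simp
qed

lemma eF_le_xf: "eF a b \<le> xf a b"
  unfolding eF_xf using xf_pos[of a b] by (simp add: ln_add_one_self_le_self)

lemma eF_anti: assumes "a \<le> a'" shows "eF a' b \<le> eF a b"
proof -
  have "xf a' b \<le> xf a b" unfolding xf_def using c2_pos assms by simp
  then show ?thesis unfolding eF_xf using xf_pos[of a' b] by (intro ln_mono) auto
qed

lemma rho_bounds: assumes "2.56 \<le> b" shows "rho b \<le> 3/200" "-3/100 < rho b"
proof -
  show "rho b \<le> 3/200" unfolding rho_def using eF_nonneg[of "3/200" b] by simp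
  have "(3/200, b) \<in> Xset" unfolding Xset_def using assms by auto
  then have "eF (3/200) b \<le> 0.0612" using xf_X eF_le_xf by (meson order_trans)
  then show "-3/100 < rho b" unfolding rho_def by simp
qed

lemma rho_i: assumes "2.56 \<le> b" shows "fst (F (rho b, b)) \<le> -3/100"
proof -
  have "eF (3/200) b \<le> eF (rho b) b" using rho_bounds[OF assms] by (intro eF_anti) auto
  then show ?thesis unfolding F_simp by (simp add: rho_def)
qed

lemma qq6: "exp (- c0 / 3) = 1 / qq ^ 6"
proof -
  have "qq ^ 6 = exp (real 6 * (ln 2 / 9))" unfolding qq_def by (rule exp_of_nat_mult[symmetric])
  also have "\<dots> = exp (c0 / 3)" unfolding c0_eq by simp
  finally show ?thesis by (simp add: exp_minus field_simps)
qed

lemma rho_ii: assumes b: "2.56 \<le> b" shows "rho (snd (F (-3/100, b))) \<le> fst (F (-3/100, b))"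
proof -
  define y where "y = xf (-3/100) b"
  have ypos: "0 < y" unfolding y_def by (rule xf_pos)
  have yb: "y \<le> 0.0612" unfolding y_def using b by (intro xf_X) (auto simp: Xset_def)
  define b' where "b' = snd (F (-3/100, b))"
  have b'eq: "b' = b + c0 + ln (1 + y)" unfolding b'_def y_def F_simp eF_xf by simp
  define z where "z = xf (3/200) b'"
  have "c0 > 0" unfolding c0_eq by simp
  have "0 \<le> ln (1+y)" using ypos by simp
  have b'b: "2.56 \<le> b'" unfolding b'eq using b \<open>c0 > 0\<close> \<open>0 \<le> ln (1+y)\<close> by simp
  have zb: "z \<le> 0.0612" unfolding z_def using b'b by (intro xf_X) (auto simp: Xset_def)
  have zpos: "0 < z" unfolding z_def by (rule xf_pos)
  have "z = y * exp (-(9/50 + ln (1+y))/3) * exp (- c0 / 3)"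
    unfolding z_def y_def b'eq xf_def by (simp add: exp_add[symmetric] field_simps)
  also have "exp (- c0 / 3) = 1 / qq ^ 6" by (rule qq6)
  finally have zeq: "z = y * exp (-(9/50 + ln (1+y))/3) / qq ^ 6" by simp
  have "ln (1+y) \<le> y" using ypos by (simp add: ln_add_one_self_le_self)
  then have "1 - (9/50 + y)/3 \<le> 1 - (9/50 + ln (1+y))/3" by simp
  also have "\<dots> \<le> exp (-(9/50 + ln (1+y))/3)"
  proof -
    have "1 + (-(9/50 + ln (1+y))/3) \<le> exp (-(9/50 + ln (1+y))/3)" by (rule exp_ge_add_one_self)
    then show ?thesis by linarith
  qed
  finally have ex: "1 - (9/50 + y)/3 \<le> exp (-(9/50 + ln (1+y))/3)" .
  have "(0.9196::real) \<le> 1 - (9/50 + y)/3" using yb by simp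
  with ex have ex2: "0.9196 \<le> exp (-(9/50 + ln (1+y))/3)" by linarith
  have q6: "qq ^ 6 \<le> 1.0801 ^ 6" using qq_hi qq_pos by (intro power_mono) auto
  have q6': "(1.0801::real) ^ 6 \<le> 1.5879" by (simp add: power_divide)
  have q6c: "qq ^ 6 \<le> 1.5879" using q6 q6' by linarith
  have "0.579 * y \<le> (0.9196 / 1.5879) * y" using ypos by (intro mult_right_mono) auto
  also have "\<dots> \<le> exp (-(9/50 + ln (1+y))/3) / qq ^ 6 * y"
    using ypos ex2 q6c qq_pos by (intro mult_right_mono frac_le) auto
  finally have zy: "0.579 * y \<le> z" unfolding zeq by (simp add: field_simps)
  have lz: "z - z\<^sup>2 \<le> ln (1 + z)" using zpos zb by (intro ln_one_plus_pos_lower_bound) auto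
  define k where "k = (579/1000::real) * y"
  have kpos: "0 < k" unfolding k_def using ypos by simp
  have "k - k\<^sup>2 \<le> z - z\<^sup>2"
  proof -
    have "z\<^sup>2 - k\<^sup>2 = (z - k) * (z + k)" by (simp add: power2_eq_square algebra_simps)
    also have "\<dots> \<le> (z - k) * 1" using zy zb kpos unfolding k_def by (intro mult_left_mono) auto
    finally show ?thesis by simp
  qed
  have ly: "ln (1+y) \<le> y" using ypos by (simp add: ln_add_one_self_le_self)
  have yy: "y\<^sup>2 \<le> 0.0612 * y" using yb ypos by (simp add: power2_eq_square)
  have yy': "y\<^sup>2 \<le> 153/2500 * y" using yy by simp
  have yb': "y \<le> 153/2500" using yb by simp
  have kk: "k\<^sup>2 = 335241/1000000 * y\<^sup>2" unfolding k_def by (simp add: power2_eq_square)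
  have "335241/1000000 * y\<^sup>2 \<le> 335241/1000000 * (153/2500 * y)" using yy' by (intro mult_left_mono) auto
  then have "y - (k - k\<^sup>2)/2 \<le> 9/200" unfolding kk using yb' unfolding k_def by argo
  then have "ln (1+y) - ln (1+z)/2 \<le> 9/200" using ly lz \<open>k - k\<^sup>2 \<le> z - z\<^sup>2\<close> by argo
  moreover have "rho b' = 3/200 - ln (1+z)/2" unfolding rho_def z_def eF_xf by simp
  moreover have "fst (F (-3/100, b)) = 6/100 - ln (1+y)" unfolding F_simp eF_xf y_def by simp
  ultimately show ?thesis unfolding b'_def[symmetric] by argo
qed

lemma hf_arg_pos: "0 < 1 + c2 * exp x" using c2_pos by (simp add: add_pos_pos)

lemma cont_hf: "continuous_on S hf"
  unfolding hf_def using hf_arg_pos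
  by (intro continuous_intros) (auto simp: hf_arg_pos less_imp_neq[symmetric] dest: sym)

lemma F_eq: "F = (\<lambda>p. (-2 * fst p - hf (4 * fst p + snd p), snd p + c0 + hf (4 * fst p + snd p)))"
  by (rule ext) (simp add: prod_eq_iff F_fst F_snd)

lemma cont_F: "continuous_on S F"
  unfolding F_eq
  by (intro continuous_intros continuous_on_compose2[OF cont_hf]) auto

lemma cont_Fn: "continuous_on S (F^^n)"
proof (induction n)
  case 0 then show ?case by (simp add: continuous_on_id)
next
  case (Suc n)
  then show ?case using continuous_on_compose2[OF cont_F[of UNIV] Suc.IH] by simp
qed

lemma cont_rho: "continuous_on S rho"
  unfolding rho_def eF_hf by (intro continuous_intros continuous_on_compose2[OF cont_hf]) auto

lemma Xset_eq: "Xset = {-3/100..3/100} \<times> {2.56..}"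
  unfolding Xset_def by auto

lemma closed_X: "closed Xset"
  unfolding Xset_eq by (intro closed_Times) auto

lemma F_snd_ge: "snd p \<le> snd (F p)"
proof -
  have "hf (4*fst p + snd p) \<ge> 0" using eF_nonneg[of "fst p" "snd p"] unfolding eF_hf .
  moreover have "c0 \<ge> 0" unfolding c0_eq by simp
  ultimately show ?thesis unfolding F_snd by simp
qed

definition Good :: "real \<Rightarrow> nat \<Rightarrow> real set" where
  "Good b0 n = {a. -3/100 \<le> a \<and> a \<le> 3/100 \<and> (\<forall>k\<le>n. (F^^k) (a, b0) \<in> Xset)}"

lemma between_mono:
  fixes g :: "real \<Rightarrow> real"
  assumes s: "\<sigma> = 1 \<or> \<sigma> = -1" and m: "\<forall>x\<in>S. \<forall>y\<in>S. x < y \<longrightarrow> \<sigma> * (g y - g x) > 0"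
    and S: "u \<in> S" "v \<in> S" "a \<in> S" and a: "a \<in> closed_segment u v"
  shows "min (g u) (g v) \<le> g a \<and> g a \<le> max (g u) (g v)"
proof -
  have m': "\<sigma> * (g y - g x) \<ge> 0" if "x \<in> S" "y \<in> S" "x \<le> y" for x y
    using m that by (cases "x = y") (auto intro: less_imp_le)
  have ua: "\<sigma> * (g a - g u) \<ge> 0 \<and> \<sigma> * (g v - g a) \<ge> 0 \<or> \<sigma> * (g u - g a) \<ge> 0 \<and> \<sigma> * (g a - g v) \<ge> 0"
    using a S m'[of u a] m'[of a v] m'[of v a] m'[of a u] unfolding closed_segment_eq_real_ivl
    by (auto split: if_splits)
  from s show ?thesis
  proof
    assume "\<sigma> = 1" then show ?thesis using ua by auto
  next
    assume "\<sigma> = -1" then show ?thesis using ua by auto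
  qed
qed

lemma Good_mono:
  assumes "x \<in> Good b0 n" "y \<in> Good b0 n" "x < y"
  shows "(-1)^(Suc n) * (fst ((F^^Suc n) (y, b0)) - fst ((F^^Suc n) (x, b0))) > 0"
proof -
  have "\<forall>k<Suc n. (F^^k) (x,b0) \<in> Xset \<and> (F^^k) (y,b0) \<in> Xset"
    using assms unfolding Good_def by auto
  from cone_iter[OF this, of 1] assms(3)
  have "(3/2)^Suc n * (y - x) \<le> (-1)^(Suc n) * (fst ((F^^Suc n) (y, b0)) - fst ((F^^Suc n) (x, b0)))"
    by simp
  moreover have "0 < (3/2::real)^Suc n * (y - x)" using assms(3) by simp
  ultimately show ?thesis by linarith
qed

lemma Fn_Suc: "(F^^Suc n) p = F ((F^^n) p)" by simp

lemma Good_H: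
  assumes b0: "2.56 \<le> b0"
  shows "\<exists>L R. closed_segment L R \<subseteq> Good b0 n \<and> fst ((F^^n) (L,b0)) = -3/100
           \<and> fst ((F^^n) (R,b0)) = rho (snd ((F^^n) (R,b0)))"
proof (induction n)
  case 0
  have "closed_segment (-3/100) (rho b0) \<subseteq> Good b0 0"
    using rho_bounds[OF b0] b0 unfolding Good_def closed_segment_eq_real_ivl Xset_def by auto
  then show ?case by (intro exI[of _ "-3/100"] exI[of _ "rho b0"]) simp
next
  case (Suc n)
  then obtain L R where seg: "closed_segment L R \<subseteq> Good b0 n"
    and fL: "fst ((F^^n) (L,b0)) = -3/100" and fR: "fst ((F^^n) (R,b0)) = rho (snd ((F^^n) (R,b0)))"
    by blast
  define g where "g a = fst ((F^^Suc n) (a,b0))" for a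
  define h where "h a = snd ((F^^Suc n) (a,b0))" for a
  define \<psi> where "\<psi> a = g a - rho (h a)" for a
  have GX: "(F^^n) (a,b0) \<in> Xset" if "a \<in> Good b0 n" for a using that unfolding Good_def by auto
  have hge: "2.56 \<le> h a" if "a \<in> Good b0 n" for a
    using GX[OF that] F_snd_ge[of "(F^^n) (a,b0)"] unfolding h_def Xset_def by auto
  have LG: "L \<in> Good b0 n" and RG: "R \<in> Good b0 n" using seg by auto
  have cg: "continuous_on UNIV g" unfolding g_def
    by (intro continuous_intros continuous_on_compose2[OF cont_Fn[of UNIV]]) auto
  have ch: "continuous_on UNIV h" unfolding h_def
    by (intro continuous_intros continuous_on_compose2[OF cont_Fn[of UNIV]]) auto
  have cpsi: "continuous_on UNIV \<psi>" unfolding \<psi>_def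
    by (intro continuous_intros cg continuous_on_compose2[OF cont_rho ch]) auto
  obtain bL where pL: "(F^^n) (L,b0) = (-3/100, bL)" using fL by (metis prod.collapse)
  have bL: "2.56 \<le> bL" using GX[OF LG] unfolding pL Xset_def by auto
  have psiL: "\<psi> L \<ge> 0" unfolding \<psi>_def g_def h_def Fn_Suc pL using rho_ii[OF bL] by simp
  obtain bR where pR: "(F^^n) (R,b0) = (rho bR, bR)" using fR by (metis prod.collapse)
  have bR: "2.56 \<le> bR" using GX[OF RG] unfolding pR Xset_def by auto
  have gR: "g R \<le> -3/100" unfolding g_def Fn_Suc pR using rho_i[OF bR] .
  have psiR: "\<psi> R < 0" unfolding \<psi>_def using gR rho_bounds(2)[OF hge[OF RG]] by simp
  have "0 \<in> closed_segment (\<psi> L) (\<psi> R)" using psiL psiR unfolding closed_segment_eq_real_ivl by auto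
  then obtain R' where R': "R' \<in> closed_segment L R" "\<psi> R' = 0"
    using IVT'_closed_segment_real[of 0 \<psi> L R] continuous_on_subset[OF cpsi] by auto
  have R'G: "R' \<in> Good b0 n" using R' seg by auto
  have gR': "g R' = rho (h R')" using R'(2) unfolding \<psi>_def by simp
  have "-3/100 \<in> closed_segment (g R') (g R)"
    using gR gR' rho_bounds(2)[OF hge[OF R'G]] unfolding closed_segment_eq_real_ivl by auto
  then obtain L' where L': "L' \<in> closed_segment R' R" "g L' = -3/100"
    using IVT'_closed_segment_real[of "-3/100" g R' R] continuous_on_subset[OF cg] by auto
  have sub0: "closed_segment R' R \<subseteq> closed_segment L R"
    using R'(1) by (intro closed_segment_subset) auto
  have L'seg: "L' \<in> closed_segment L R" using L'(1) sub0 by auto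
  have L'G: "L' \<in> Good b0 n" using L'seg seg by auto
  have sub: "closed_segment L' R' \<subseteq> closed_segment L R"
    using R'(1) L'seg by (intro closed_segment_subset) auto
  have s1: "(-1::real)^Suc n = 1 \<or> (-1::real)^Suc n = -1" by (cases "even n") auto
  have mono: "\<forall>x\<in>Good b0 n. \<forall>y\<in>Good b0 n. x < y \<longrightarrow> (-1)^Suc n * (g y - g x) > 0"
    unfolding g_def using Good_mono by blast
  have "closed_segment L' R' \<subseteq> Good b0 (Suc n)"
  proof
    fix a assume a: "a \<in> closed_segment L' R'"
    then have aG: "a \<in> Good b0 n" using sub seg by auto
    have "min (g L') (g R') \<le> g a \<and> g a \<le> max (g L') (g R')"
      using between_mono[OF s1 mono L'G R'G aG a] .
    moreover have "g R' \<le> 3/200" using gR' rho_bounds(1)[OF hge[OF R'G]] by simp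
    moreover have "-3/100 < g R'" using gR' rho_bounds(2)[OF hge[OF R'G]] by simp
    ultimately have ga: "-3/100 \<le> g a \<and> g a \<le> 3/100" using L'(2) by auto
    have "(F^^Suc n) (a,b0) \<in> Xset" using ga hge[OF aG] unfolding g_def h_def Xset_def
      by (cases "(F^^Suc n) (a,b0)") auto
    then show "a \<in> Good b0 (Suc n)" using aG unfolding Good_def by (auto simp: le_Suc_eq)
  qed
  moreover have "fst ((F^^Suc n) (L',b0)) = -3/100" using L'(2) unfolding g_def .
  moreover have "fst ((F^^Suc n) (R',b0)) = rho (snd ((F^^Suc n) (R',b0)))" using gR' unfolding g_def h_def .
  ultimately show ?case by blast
qed

lemma Good_closed: "closed (Good b0 n)"
proof -
  have "Good b0 n = {-3/100..3/100} \<inter> (\<Inter>k\<in>{..n}. (\<lambda>a. (F^^k) (a,b0)) -` Xset)"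
    unfolding Good_def by auto
  moreover have "closed ((\<lambda>a. (F^^k) (a,b0)) -` Xset)" for k
    by (intro closed_vimage closed_X continuous_on_compose2[OF cont_Fn[of UNIV]] continuous_intros) auto
  ultimately show ?thesis by (auto intro!: closed_Int closed_INT)
qed

lemma W_exists:
  assumes b0: "2.56 \<le> b0"
  shows "\<exists>a. -3/100 \<le> a \<and> a \<le> 3/100 \<and> (\<forall>n. (F^^n) (a,b0) \<in> Xset)"
proof -
  have "\<Inter>(range (Good b0)) \<noteq> {}"
  proof (rule compact_nest)
    fix n
    show "compact (Good b0 n)"
    proof -
      have "Good b0 n = {-3/100..3/100} \<inter> Good b0 n" unfolding Good_def by auto
      moreover have "compact ({-3/100..3/100::real} \<inter> Good b0 n)"
        by (rule compact_Int_closed[OF compact_Icc Good_closed])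
      ultimately show ?thesis by simp
    qed
    show "Good b0 n \<noteq> {}" using Good_H[OF b0, of n] by (auto dest: subsetD[of _ _ _])
  next
    fix m n :: nat assume "m \<le> n" then show "Good b0 n \<subseteq> Good b0 m" unfolding Good_def by auto
  qed
  then obtain a where "\<forall>n. a \<in> Good b0 n" by auto
  then show ?thesis unfolding Good_def by auto
qed

definition Wset :: "(real \<times> real) set" where "Wset = {p. \<forall>n. (F^^n) p \<in> Xset}"

lemma W_lip: assumes p: "p \<in> Wset" and q: "q \<in> Wset"
  shows "\<bar>fst q - fst p\<bar> \<le> \<bar>snd q - snd p\<bar>"
proof (rule ccontr)
  assume "\<not> ?thesis"
  then have lt: "\<bar>snd q - snd p\<bar> < \<bar>fst q - fst p\<bar>" by simp
  define s :: real where "s = (if fst q - fst p > 0 then 1 else -1)"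
  have s: "s = 1 \<or> s = -1" unfolding s_def by auto
  have sd: "s * (fst q - fst p) = \<bar>fst q - fst p\<bar>" unfolding s_def using lt by auto
  have d: "0 < \<bar>fst q - fst p\<bar>" using lt by linarith
  obtain n where n: "6/100 / \<bar>fst q - fst p\<bar> < (3/2::real)^n" using real_arch_pow[of "3/2::real"] by auto
  have all: "\<forall>k<n. (F^^k) p \<in> Xset \<and> (F^^k) q \<in> Xset" using p q unfolding Wset_def by auto
  have ci: "((-1)^n * s) * (fst ((F^^n) q) - fst ((F^^n) p)) \<ge> (3/2)^n * (s*(fst q - fst p))"
    using cone_iter[OF all s] sd d lt by auto
  have "(F^^n) p \<in> Xset" "(F^^n) q \<in> Xset" using p q unfolding Wset_def by auto
  then have "-3/100 \<le> fst ((F^^n) q) \<and> fst ((F^^n) q) \<le> 3/100 \<and> -3/100 \<le> fst ((F^^n) p) \<and> fst ((F^^n) p) \<le> 3/100"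
    unfolding Xset_def by auto
  then have "\<bar>fst ((F^^n) q) - fst ((F^^n) p)\<bar> \<le> 6/100" unfolding abs_le_iff by linarith
  moreover have "\<bar>(-1)^n * s\<bar> = 1" using s by auto
  ultimately have "((-1)^n * s) * (fst ((F^^n) q) - fst ((F^^n) p)) \<le> 6/100"
    by (metis abs_mult abs_le_D1 mult_1)
  with ci sd have "(3/2)^n * \<bar>fst q - fst p\<bar> \<le> 6/100" by simp
  moreover have "6/100 < (3/2)^n * \<bar>fst q - fst p\<bar>" using n d by (simp add: divide_less_eq)
  ultimately show False by simp
qed

definition gam :: "real \<Rightarrow> real" where
  "gam b = (SOME a. -3/100 \<le> a \<and> a \<le> 3/100 \<and> (a,b) \<in> Wset)"

lemma gam_W: assumes "2.56 \<le> b" shows "-3/100 \<le> gam b \<and> gam b \<le> 3/100 \<and> (gam b, b) \<in> Wset"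
  unfolding gam_def by (rule someI_ex) (use W_exists[OF assms] in \<open>auto simp: Wset_def\<close>)

lemma gam_Gam: "gam \<in> Gam"
  unfolding Gam_def
proof (intro CollectI conjI allI impI)
  fix b :: real assume "2.56 \<le> b" then show "-0.03 \<le> gam b" "gam b \<le> 0.03" using gam_W by auto
next
  fix b1 b2 :: real assume b: "2.56 \<le> b1" "2.56 \<le> b2"
  have "\<bar>fst (gam b1, b1) - fst (gam b2, b2)\<bar> \<le> \<bar>snd (gam b1, b1) - snd (gam b2, b2)\<bar>"
    using gam_W[OF b(1)] gam_W[OF b(2)] by (intro W_lip) auto
  then show "\<bar>gam b1 - gam b2\<bar> \<le> \<bar>b1 - b2\<bar>" by simp
qed

lemma W_sub_X: "Wset \<subseteq> Xset"
  unfolding Wset_def by (auto dest: spec[of _ 0])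

lemma graph_gam: "graph gam = Wset"
proof
  show "graph gam \<subseteq> Wset" unfolding graph_def using gam_W by auto
  show "Wset \<subseteq> graph gam"
  proof
    fix p assume p: "p \<in> Wset"
    obtain a b where pab: "p = (a,b)" by (cases p)
    have b: "2.56 \<le> b" using p W_sub_X unfolding pab Xset_def by auto
    have "\<bar>gam b - a\<bar> \<le> \<bar>b - b\<bar>" using W_lip[of p "(gam b, b)"] p gam_W[OF b] unfolding pab by auto
    then have "a = gam b" by simp
    then show "p \<in> graph gam" unfolding graph_def pab using b by auto
  qed
qed

lemma W_inv: "{p \<in> Xset. F p \<in> Wset} = Wset"
proof safe
  fix p assume "p \<in> Xset" "F p \<in> Wset"
  then show "p \<in> Wset" unfolding Wset_def
  proof (intro CollectI allI)
    fix n assume X: "p \<in> Xset" and W: "F p \<in> {p. \<forall>n. (F ^^ n) p \<in> Xset}"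
    show "(F^^n) p \<in> Xset"
    proof (cases n)
      case 0 then show ?thesis using X by simp
    next
      case (Suc m)
      have "(F^^n) p = (F^^m) (F p)" unfolding Suc funpow_Suc_right by simp
      then show ?thesis using W by simp
    qed
  qed
next
  fix p assume "p \<in> Wset" then show "p \<in> Xset" using W_sub_X by auto
next
  fix p assume p: "p \<in> Wset"
  have "(F^^n) (F p) \<in> Xset" for n
  proof -
    have eq: "(F^^n) (F p) = (F^^Suc n) p" unfolding funpow_Suc_right by simp
    have "(F^^Suc n) p \<in> Xset" using p unfolding Wset_def by blast
    then show ?thesis by (simp only: eq)
  qed
  then show "F p \<in> Wset" unfolding Wset_def by simp
qed

lemma graph_inv_eq: "graph_inv = Wset"
  unfolding graph_inv_def
proof (rule the_equality)
  show "\<exists>\<gamma>\<in>Gam. Wset = graph \<gamma> \<and> {p \<in> Xset. F p \<in> Wset} = Wset"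
    using gam_Gam graph_gam W_inv by auto
next
  fix G assume "\<exists>\<gamma>\<in>Gam. G = graph \<gamma> \<and> {p \<in> Xset. F p \<in> G} = G"
  then obtain \<gamma> where g: "\<gamma> \<in> Gam" "G = graph \<gamma>" and inv: "{p \<in> Xset. F p \<in> G} = G" by blast
  have GX: "G \<subseteq> Xset" using inv by auto
  have GF: "F x \<in> G" if "x \<in> G" for x using inv that by auto
  have orb: "(F^^n) p \<in> G" if "p \<in> G" for p n
    by (induction n) (use that GF in auto)
  have GW: "G \<subseteq> Wset" unfolding Wset_def using orb GX by auto
  show "G = Wset"
  proof
    show "G \<subseteq> Wset" by (rule GW)
    show "Wset \<subseteq> G"
    proof
      fix p assume p: "p \<in> Wset"
      obtain a b where pab: "p = (a,b)" by (cases p)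
      have b: "2.56 \<le> b" using p W_sub_X unfolding pab Xset_def by auto
      have "(\<gamma> b, b) \<in> G" unfolding g(2) graph_def using b by auto
      then have "(\<gamma> b, b) \<in> Wset" using GW by auto
      then have "\<bar>\<gamma> b - a\<bar> \<le> \<bar>b - b\<bar>" using W_lip[of p "(\<gamma> b, b)"] p unfolding pab by auto
      then have "a = \<gamma> b" by simp
      then show "p \<in> G" unfolding g(2) graph_def pab using b by auto
    qed
  qed
qed

lemma c2_exp: "c2 = exp (-26/9 * ln 2)" unfolding c2_def powr_def by simp

lemma xf_exp: "xf a b = exp (-26/9 * ln 2 - (4*a+b)/3)"
proof -
  have "xf a b = exp (-26/9 * ln 2 + (-(4*a+b)/3))" unfolding xf_def c2_exp exp_add by (rule refl)
  also have "-26/9 * ln 2 + (-(4*a+b)/3) = -26/9 * ln 2 - (4*a+b)/3" by (simp add: field_simps)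
  finally show ?thesis .
qed

definition X0 :: "real \<Rightarrow> real" where "X0 t = exp (-22/9 * ln 2 - 2*t)"
definition X1 :: "real \<Rightarrow> real" where "X1 t = exp (-28/9 * ln 2 + 2*t) * (1 + X0 t)"
definition X2 :: "real \<Rightarrow> real" where "X2 t = exp (-34/9 * ln 2 - 6*t) * (1 + X1 t) / (1 + X0 t)^3"

lemma X0_pos: "X0 t > 0" unfolding X0_def by simp
lemma X1_pos: "X1 t > 0" unfolding X1_def using X0_pos[of t] by (simp add: add_pos_pos)
lemma X2_pos: "X2 t > 0" unfolding X2_def using X0_pos[of t] X1_pos[of t] by (simp add: add_pos_pos)

lemma segI_eq: "segI t = (t, 2*t - 4/3 * ln 2)"
  unfolding segI_def using ln_realpow[of 2 2] by simp

lemma orb0: "xf (fst (segI t)) (snd (segI t)) = X0 t"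
  unfolding segI_eq xf_exp X0_def by (simp add: field_simps)

lemma orb1: "F (segI t) = (-2*t - ln (1 + X0 t), 2*t + 2/3 * ln 2 + ln (1 + X0 t))"
  using orb0[of t] unfolding segI_eq F_simp eF_xf c0_eq by simp

lemma orb1x: "xf (fst (F (segI t))) (snd (F (segI t))) = X1 t"
proof -
  have "xf (fst (F (segI t))) (snd (F (segI t))) = exp ((-28/9 * ln 2 + 2*t) + ln (1 + X0 t))"
    unfolding orb1 xf_exp by (simp add: field_simps)
  also have "\<dots> = X1 t" unfolding exp_add X1_def using X0_pos[of t] by simp
  finally show ?thesis .
qed

lemma orb2: "F (F (segI t)) = (4*t + 2 * ln (1 + X0 t) - ln (1 + X1 t),
     2*t + 8/3 * ln 2 + ln (1 + X0 t) + ln (1 + X1 t))"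
  using orb1x[of t] unfolding F_simp[of "fst (F (segI t))" "snd (F (segI t))", unfolded prod.collapse] eF_xf
  unfolding orb1 c0_eq by simp

lemma orb2x: "xf (fst (F (F (segI t)))) (snd (F (F (segI t)))) = X2 t"
proof -
  have "xf (fst (F (F (segI t)))) (snd (F (F (segI t)))) =
     exp ((-34/9 * ln 2 - 6*t) + ln (1 + X1 t) - real 3 * ln (1 + X0 t))"
    unfolding orb2 xf_exp by (simp add: field_simps)
  also have "\<dots> = X2 t" unfolding exp_add exp_diff exp_of_nat_mult X2_def using X0_pos[of t] X1_pos[of t]
    by simp
  finally show ?thesis .
qed

lemma orb3: "fst ((F^^3) (segI t)) = -8*t - 4 * ln (1 + X0 t) + 2 * ln (1 + X1 t) - ln (1 + X2 t)"
proof -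
  have "(F^^3) (segI t) = F (F (F (segI t)))" by (simp add: numeral_3_eq_3)
  then show ?thesis
    using orb2x[of t] unfolding F_simp[of "fst (F (F (segI t)))" "snd (F (F (segI t)))", unfolded prod.collapse] eF_xf
    unfolding orb2 by simp
qed

lemma qq_pow: "qq ^ n = exp (real n * ln 2 / 9)"
  unfolding qq_def exp_of_nat_mult[symmetric] by simp

lemma exp_ln2_nat: "exp (real n * ln 2) = 2 ^ n"
  by (simp add: exp_of_nat_mult)

lemma Q0_eq: "exp (-22/9 * ln (2::real)) = qq^5 / 8"
proof -
  have "exp (-22/9 * ln (2::real)) * exp (real 3 * ln 2) = exp (real 5 * ln 2 / 9)"
    unfolding exp_add[symmetric] by simp
  then show ?thesis unfolding qq_pow exp_ln2_nat by (simp add: field_simps)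
qed

lemma Q1_eq: "exp (-28/9 * ln (2::real)) = qq^8 / 16"
proof -
  have "exp (-28/9 * ln (2::real)) * exp (real 4 * ln 2) = exp (real 8 * ln 2 / 9)"
    unfolding exp_add[symmetric] by simp
  then show ?thesis unfolding qq_pow exp_ln2_nat by (simp add: field_simps)
qed

lemma Q2_eq: "exp (-34/9 * ln (2::real)) = qq^2 / 16"
proof -
  have "exp (-34/9 * ln (2::real)) * exp (real 4 * ln 2) = exp (real 2 * ln 2 / 9)"
    unfolding exp_add[symmetric] by simp
  then show ?thesis unfolding qq_pow exp_ln2_nat by (simp add: field_simps)
qed

lemma Q0_b: "1836/10000 \<le> exp (-22/9 * ln (2::real))" "exp (-22/9 * ln (2::real)) \<le> 1838/10000"
proof -
  have "1.08^5 \<le> qq^5" "qq^5 \<le> 1.0801^5" using qq_lo qq_hi by (intro power_mono; simp)+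
  then show "1836/10000 \<le> exp (-22/9 * ln (2::real))" "exp (-22/9 * ln (2::real)) \<le> 1838/10000"
    unfolding Q0_eq by (simp_all add: power_divide)
qed

lemma Q1_b: "1156/10000 \<le> exp (-28/9 * ln (2::real))" "exp (-28/9 * ln (2::real)) \<le> 1158/10000"
proof -
  have "1.08^8 \<le> qq^8" "qq^8 \<le> 1.0801^8" using qq_lo qq_hi by (intro power_mono; simp)+
  then show "1156/10000 \<le> exp (-28/9 * ln (2::real))" "exp (-28/9 * ln (2::real)) \<le> 1158/10000"
    unfolding Q1_eq by (simp_all add: power_divide)
qed

lemma Q2_b: "729/10000 \<le> exp (-34/9 * ln (2::real))" "exp (-34/9 * ln (2::real)) \<le> 730/10000"
proof -
  have "1.08^2 \<le> qq^2" "qq^2 \<le> 1.0801^2" using qq_lo qq_hi by (intro power_mono; simp)+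
  then show "729/10000 \<le> exp (-34/9 * ln (2::real))" "exp (-34/9 * ln (2::real)) \<le> 730/10000"
    unfolding Q2_eq by (simp_all add: power_divide)
qed

lemma X_at: assumes r: "0 < r" and t: "t = ln r / 2"
  shows "X0 t = exp (-22/9 * ln (2::real)) / r"
    and "X1 t = exp (-28/9 * ln (2::real)) * r * (1 + X0 t)"
    and "X2 t = exp (-34/9 * ln (2::real)) / r^3 * (1 + X1 t) / (1 + X0 t)^3"
    and "exp (fst ((F^^3) (segI t))) = (1 + X1 t)^2 / (r^4 * (1 + X0 t)^4 * (1 + X2 t))"
proof -
  have "2*t = ln r" using t by simp
  then have e2: "exp (2*t) = r" using r by simp
  have em2: "exp (-2*t) = 1/r" using e2 exp_minus[of "2*t"] by (simp add: inverse_eq_divide)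
  have e6: "exp (-6*t) = 1/r^3"
  proof -
    have "exp (-6*t) = exp (real 3 * (-2*t))" by simp
    then show ?thesis unfolding exp_of_nat_mult em2 by (simp add: power_one_over)
  qed
  show "X0 t = exp (-22/9 * ln (2::real)) / r" unfolding X0_def exp_diff em2[unfolded exp_minus] using e2
    by (simp add: exp_diff exp_minus field_simps)
  show "X1 t = exp (-28/9 * ln (2::real)) * r * (1 + X0 t)" unfolding X1_def exp_add e2 by simp
  show "X2 t = exp (-34/9 * ln (2::real)) / r^3 * (1 + X1 t) / (1 + X0 t)^3"
  proof -
    have "exp (6*t) = exp (real 3 * (2*t))" by simp
    then have e6': "exp (6*t) = r^3" unfolding exp_of_nat_mult e2 .
    show ?thesis unfolding X2_def exp_diff e6' by simp
  qed
  have A: "0 < 1 + X0 t" "0 < 1 + X1 t" "0 < 1 + X2 t" using X0_pos X1_pos X2_pos by (simp_all add: add_pos_pos)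
  have "exp (fst ((F^^3) (segI t))) = exp (real 4 * (-2*t)) * exp (ln (1 + X1 t)) ^ 2 / (exp (ln (1 + X0 t)) ^ 4 * exp (ln (1 + X2 t)))"
    unfolding orb3 exp_of_nat_mult[symmetric] exp_add[symmetric] exp_diff[symmetric] by (simp add: algebra_simps)
  also have "\<dots> = (1 + X1 t)^2 / (r^4 * (1 + X0 t)^4 * (1 + X2 t))"
    unfolding exp_of_nat_mult em2 using A r by (simp add: power_one_over field_simps)
  finally show "exp (fst ((F^^3) (segI t))) = (1 + X1 t)^2 / (r^4 * (1 + X0 t)^4 * (1 + X2 t))" .
qed

lemma exp_003: "exp (3/100::real) < 12/10"
proof -
  have "1 + (-3/100::real) \<le> exp (-3/100)" by (rule exp_ge_add_one_self)
  then have "97/100 \<le> exp (-3/100::real)" by simp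
  moreover have one: "exp (3/100::real) * exp (-3/100) = 1" by (simp add: exp_add[symmetric])
  show ?thesis
  proof (rule ccontr)
    assume "\<not> ?thesis"
    then have "12/10 * (97/100) \<le> exp (3/100::real) * exp (-3/100)"
      using \<open>97/100 \<le> exp (-3/100::real)\<close> by (intro mult_mono) auto
    then show False unfolding one by simp
  qed
qed

lemma fst_t1: "3/100 < fst ((F^^3) (segI (ln (4/5) / 2)))"
proof -
  define t where "t = ln (4/5::real) / 2"
  define Q0 where "Q0 = exp (-22/9 * ln (2::real))"
  define Q1 where "Q1 = exp (-28/9 * ln (2::real))"
  define Q2 where "Q2 = exp (-34/9 * ln (2::real))"
  have r: "0 < (4/5::real)" by simp
  note XA = X_at[OF r t_def, folded Q0_def Q1_def Q2_def]
  have x0: "X0 t = Q0 * (5/4)" using XA(1) by simp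
  have x1: "X1 t = Q1 * (4/5) * (1 + X0 t)" using XA(2) by simp
  have x2: "X2 t = Q2 * (125/64) * (1 + X1 t) / (1 + X0 t)^3" using XA(3) by (simp add: field_simps)
  have E: "exp (fst ((F^^3) (segI t))) = (1 + X1 t)^2 / ((256/625) * (1 + X0 t)^4 * (1 + X2 t))"
    using XA(4) by (simp add: power_divide)
  have q0: "1836/10000 \<le> Q0" "Q0 \<le> 1838/10000" using Q0_b unfolding Q0_def by auto
  have q1: "1156/10000 \<le> Q1" "Q1 \<le> 1158/10000" using Q1_b unfolding Q1_def by auto
  have q2: "729/10000 \<le> Q2" "Q2 \<le> 730/10000" using Q2_b unfolding Q2_def by auto
  have a0: "12295/10000 \<le> 1 + X0 t" "1 + X0 t \<le> 122975/100000" unfolding x0 using q0 by simp_all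
  have "1156/10000 * (4/5) * (12295/10000) \<le> Q1 * (4/5) * (1 + X0 t)"
    using q1 a0 by (intro mult_mono) auto
  then have a1l: "11137/10000 \<le> 1 + X1 t" unfolding x1 by simp
  have "Q1 * (4/5) * (1 + X0 t) \<le> 1158/10000 * (4/5) * (122975/100000)"
    using q1 a0 by (intro mult_mono) auto
  then have a1h: "1 + X1 t \<le> 1114/1000" unfolding x1 by simp
  have n2: "Q2 * (125/64) * (1 + X1 t) \<le> 730/10000 * (125/64) * (1114/1000)"
    using q2 a1h a1l by (intro mult_mono) auto
  have d2: "(12295/10000::real)^3 \<le> (1 + X0 t)^3" using a0 by (intro power_mono) auto
  have "X2 t \<le> (730/10000 * (125/64) * (1114/1000)) / (12295/10000)^3"
    unfolding x2 using n2 d2 q2 a1l by (intro frac_le) auto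
  then have a2: "1 + X2 t \<le> 10855/10000" by (simp add: power_divide)
  have X2p: "0 < 1 + X2 t" using X2_pos[of t] by simp
  have "(256/625) * (1 + X0 t)^4 * (1 + X2 t) \<le> (256/625) * (122975/100000)^4 * (10855/10000)"
    using a0 a2 X2p by (intro mult_mono power_mono) auto
  moreover have "(11137/10000)^2 \<le> (1 + X1 t)^2" using a1l by (intro power_mono) auto
  ultimately have "(11137/10000)^2 / ((256/625) * (122975/100000)^4 * (10855/10000)) \<le> exp (fst ((F^^3) (segI t)))"
    unfolding E using X2p a0 by (intro frac_le) auto
  moreover have "(12/10::real) \<le> (11137/10000)^2 / ((256/625) * (122975/100000)^4 * (10855/10000))"
    by (simp add: power_divide)
  ultimately have "exp (3/100) < exp (fst ((F^^3) (segI t)))" using exp_003 by linarith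
  then show ?thesis unfolding t_def by simp
qed

lemma fst_t2: "fst ((F^^3) (segI (ln (9/10) / 2))) < -3/100"
proof -
  define t where "t = ln (9/10::real) / 2"
  define Q0 where "Q0 = exp (-22/9 * ln (2::real))"
  define Q1 where "Q1 = exp (-28/9 * ln (2::real))"
  define Q2 where "Q2 = exp (-34/9 * ln (2::real))"
  have r: "0 < (9/10::real)" by simp
  note XA = X_at[OF r t_def, folded Q0_def Q1_def Q2_def]
  have x0: "X0 t = Q0 * (10/9)" using XA(1) by simp
  have x1: "X1 t = Q1 * (9/10) * (1 + X0 t)" using XA(2) by simp
  have x2: "X2 t = Q2 * (1000/729) * (1 + X1 t) / (1 + X0 t)^3" using XA(3) by (simp add: field_simps)
  have E: "exp (fst ((F^^3) (segI t))) = (1 + X1 t)^2 / ((6561/10000) * (1 + X0 t)^4 * (1 + X2 t))"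
    using XA(4) by (simp add: power_divide)
  have q0: "1836/10000 \<le> Q0" "Q0 \<le> 1838/10000" using Q0_b unfolding Q0_def by auto
  have q1: "1156/10000 \<le> Q1" "Q1 \<le> 1158/10000" using Q1_b unfolding Q1_def by auto
  have q2: "729/10000 \<le> Q2" "Q2 \<le> 730/10000" using Q2_b unfolding Q2_def by auto
  have a0: "1204/1000 \<le> 1 + X0 t" "1 + X0 t \<le> 120423/100000" unfolding x0 using q0 by simp_all
  have "1156/10000 * (9/10) * (1204/1000) \<le> Q1 * (9/10) * (1 + X0 t)"
    using q1 a0 by (intro mult_mono) auto
  then have a1l: "11252/10000 \<le> 1 + X1 t" unfolding x1 by simp
  have "Q1 * (9/10) * (1 + X0 t) \<le> 1158/10000 * (9/10) * (120423/100000)"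
    using q1 a0 by (intro mult_mono) auto
  then have a1h: "1 + X1 t \<le> 11256/10000" unfolding x1 by simp
  have n2: "729/10000 * (1000/729) * (11252/10000) \<le> Q2 * (1000/729) * (1 + X1 t)"
    using q2 a1l by (intro mult_mono) auto
  have d2: "(1 + X0 t)^3 \<le> (120423/100000::real)^3" using a0 by (intro power_mono) auto
  have A0p: "0 < 1 + X0 t" using a0 by simp
  have "(729/10000 * (1000/729) * (11252/10000)) / (120423/100000)^3 \<le> X2 t"
    unfolding x2 using n2 d2 q2 a1l A0p by (intro frac_le) auto
  then have a2: "10644/10000 \<le> 1 + X2 t" by (simp add: power_divide)
  have "(6561/10000) * (1204/1000)^4 * (10644/10000) \<le> (6561/10000) * (1 + X0 t)^4 * (1 + X2 t)"
    using a0 a2 by (intro mult_mono power_mono) auto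
  moreover have "(1 + X1 t)^2 \<le> (11256/10000)^2" using a1h a1l by (intro power_mono) auto
  ultimately have "exp (fst ((F^^3) (segI t))) \<le> (11256/10000)^2 / ((6561/10000) * (1204/1000)^4 * (10644/10000))"
    unfolding E by (intro frac_le) auto
  moreover have "(11256/10000)^2 / ((6561/10000) * (1204/1000)^4 * (10644/10000)) \<le> (9/10::real)"
    by (simp add: power_divide)
  moreover have "1 + (-3/100::real) \<le> exp (-3/100)" by (rule exp_ge_add_one_self)
  ultimately have "exp (fst ((F^^3) (segI t))) < exp (-3/100)" by linarith
  then show ?thesis unfolding t_def by simp
qed

lemma F_snd_c0: "snd p + c0 \<le> snd (F p)"
proof -
  have "hf (4*fst p + snd p) \<ge> 0" using eF_nonneg[of "fst p" "snd p"] unfolding eF_hf .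
  then show ?thesis unfolding F_snd by simp
qed

lemma G_snd: "2*t + 14/3 * ln 2 \<le> snd ((F^^3) (segI t))"
proof -
  have "(F^^3) (segI t) = F (F (F (segI t)))" by (simp add: numeral_3_eq_3)
  moreover have "snd (segI t) + 3 * c0 \<le> snd (F (F (F (segI t))))"
    using F_snd_c0[of "segI t"] F_snd_c0[of "F (segI t)"] F_snd_c0[of "F (F (segI t))"] by linarith
  ultimately show ?thesis unfolding segI_eq c0_eq by simp
qed

lemma cont_G: "continuous_on S (\<lambda>t. (F^^3) (segI t))"
  unfolding segI_eq by (intro continuous_on_compose2[OF cont_Fn[of UNIV]] continuous_intros) auto

lemma cont_gam: "continuous_on {2.56..} gam"
proof (rule lipschitz_on_continuous_on[where L=1], rule lipschitz_onI)
  fix x y :: real assume "x \<in> {2.56..}" "y \<in> {2.56..}"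
  then show "dist (gam x) (gam y) \<le> 1 * dist x y"
    using gam_Gam unfolding Gam_def dist_real_def by auto
qed simp

lemma part1: "\<exists>t\<in>{-0.4..0}. (F ^^ 3) (segI t) \<in> graph_inv"
proof -
  define t1 where "t1 = ln (4/5::real) / 2"
  define t2 where "t2 = ln (9/10::real) / 2"
  have "ln (5/4::real) \<le> 1/4" using ln_add_one_self_le_self[of "1/4::real"] by simp
  moreover have "ln (4/5::real) = - ln (5/4)" using ln_inverse[of "5/4::real"] by (simp add: inverse_eq_divide)
  ultimately have l45: "-1/4 \<le> ln (4/5::real)" by linarith
  have t12: "t1 \<le> t2" unfolding t1_def t2_def by simp
  have t2n: "t2 \<le> 0" unfolding t2_def by simp
  have t1l: "-1/8 \<le> t1" unfolding t1_def using l45 by simp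
  have ln2: "2/3 \<le> ln (2::real)" by (rule ln2_ge_two_thirds)
  have sb: "2.56 \<le> snd ((F^^3) (segI t))" if "t1 \<le> t" for t
  proof -
    have "64/25 \<le> snd ((F^^3) (segI t))" using G_snd[of t] that t1l ln2 by linarith
    then show ?thesis by simp
  qed
  define \<phi> where "\<phi> t = fst ((F^^3) (segI t)) - gam (snd ((F^^3) (segI t)))" for t
  have cphi: "continuous_on {t1..t2} \<phi>" unfolding \<phi>_def
    by (intro continuous_intros continuous_on_compose2[OF cont_gam] cont_G) (use sb in force)
  have "\<phi> t2 \<le> 0" using fst_t2 gam_W[OF sb[OF t12]] unfolding \<phi>_def t2_def by auto
  moreover have "0 \<le> \<phi> t1" using fst_t1 gam_W[OF sb[of t1]] unfolding \<phi>_def t1_def by auto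
  ultimately obtain t where t: "t1 \<le> t" "t \<le> t2" "\<phi> t = 0" using IVT2'[OF _ _ t12 cphi] by blast
  have "(F^^3) (segI t) = (gam (snd ((F^^3) (segI t))), snd ((F^^3) (segI t)))"
    using t(3) unfolding \<phi>_def by (simp add: prod_eq_iff)
  then have "(F^^3) (segI t) \<in> graph gam" unfolding graph_def using sb[OF t(1)] by blast
  moreover have "t \<in> {-0.4..0}" using t t1l t2n by simp
  ultimately show ?thesis using graph_gam graph_inv_eq by auto
qed

lemma hf_deriv: "(hf has_real_derivative (-(1/3) * (c2 * exp (-u/3)) / (1 + c2 * exp (-u/3)))) (at u)"
  unfolding hf_def
  by (rule derivative_eq_intros refl | use hf_arg_pos in \<open>force\<close> | simp add: field_simps)+

lemma F_deriv:
  assumes da: "((\<lambda>t. fst (P t)) has_real_derivative da) (at t)"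
    and db: "((\<lambda>t. snd (P t)) has_real_derivative db) (at t)"
  shows "((\<lambda>t. fst (F (P t))) has_real_derivative
           (-2*da + (xf (fst (P t)) (snd (P t)) / (1 + xf (fst (P t)) (snd (P t))))/3*(4*da+db))) (at t)"
    and "((\<lambda>t. snd (F (P t))) has_real_derivative
           (db - (xf (fst (P t)) (snd (P t)) / (1 + xf (fst (P t)) (snd (P t))))/3*(4*da+db))) (at t)"
proof -
  have u: "((\<lambda>t. 4 * fst (P t) + snd (P t)) has_real_derivative (4*da+db)) (at t)"
    by (intro derivative_eq_intros) (use da db in auto)
  have h: "((\<lambda>t. hf (4 * fst (P t) + snd (P t))) has_real_derivative
      (-(1/3) * (c2 * exp (-(4 * fst (P t) + snd (P t))/3)) / (1 + c2 * exp (-(4 * fst (P t) + snd (P t))/3))) * (4*da+db)) (at t)"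
    by (rule DERIV_chain2[OF hf_deriv u])
  have xe: "c2 * exp (-(4 * fst (P t) + snd (P t))/3) = xf (fst (P t)) (snd (P t))" unfolding xf_def ..
  note h' = h[unfolded xe]
  show "((\<lambda>t. fst (F (P t))) has_real_derivative
           (-2*da + (xf (fst (P t)) (snd (P t)) / (1 + xf (fst (P t)) (snd (P t))))/3*(4*da+db))) (at t)"
    unfolding F_fst by (rule derivative_eq_intros h' da refl | simp add: field_simps)+
  show "((\<lambda>t. snd (F (P t))) has_real_derivative
           (db - (xf (fst (P t)) (snd (P t)) / (1 + xf (fst (P t)) (snd (P t))))/3*(4*da+db))) (at t)"
    unfolding F_snd by (rule derivative_eq_intros h' db refl | simp add: field_simps)+
qed

lemma s_bound: fixes x c :: real assumes "0 < x" "x \<le> c / (1 - c)" "c < 1" shows "x / (1 + x) \<le> c"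
proof -
  have "x * (1 - c) \<le> c" using assms by (simp add: le_divide_eq)
  then show ?thesis using assms by (simp add: divide_le_eq algebra_simps)
qed

lemma X_small: assumes t: "-0.4 \<le> t" "t \<le> 0" shows "X1 t \<le> 1/3" "X2 t \<le> 3"
proof -
  have e1: "exp (1::real) \<le> 3" by (rule exp_le)
  have "exp (-2*t) \<le> exp 1" using t by simp
  then have em2: "exp (-2*t) \<le> 3" using e1 by linarith
  have x0: "X0 t = exp (-22/9 * ln (2::real)) * exp (-2*t)" unfolding X0_def exp_diff[symmetric] exp_add[symmetric]
    by simp
  have "X0 t \<le> 1838/10000 * 3" unfolding x0 using Q0_b em2 by (intro mult_mono) auto
  then have a0: "1 + X0 t \<le> 15514/10000" by simp
  have x1: "X1 t = exp (-28/9 * ln (2::real)) * exp (2*t) * (1 + X0 t)" unfolding X1_def exp_add by simp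
  have "exp (2*t) \<le> 1" using t by simp
  then have "X1 t \<le> 1158/10000 * 1 * (15514/10000)" unfolding x1 using Q1_b a0 X0_pos[of t]
    by (intro mult_mono) auto
  then show x1b: "X1 t \<le> 1/3" by simp
  have "exp (-6*t) \<le> exp (real 3 * 1)" using t by simp
  also have "\<dots> = exp 1 ^ 3" by (rule exp_of_nat_mult)
  also have "\<dots> \<le> 3^3" using e1 by (intro power_mono) auto
  finally have e6: "exp (-6*t) \<le> 27" by simp
  have x2: "X2 t = exp (-34/9 * ln (2::real)) * exp (-6*t) * (1 + X1 t) / (1 + X0 t)^3"
    unfolding X2_def exp_diff by (simp add: exp_minus field_simps)
  have "1 \<le> (1 + X0 t)^3" using X0_pos[of t] by simp
  then have "X2 t \<le> exp (-34/9 * ln (2::real)) * exp (-6*t) * (1 + X1 t) / 1"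
    unfolding x2 using X1_pos[of t] X0_pos[of t] by (intro divide_left_mono mult_nonneg_nonneg) auto
  moreover have "exp (-34/9 * ln (2::real)) * exp (-6*t) * (1 + X1 t) \<le> 730/10000 * 27 * (4/3)"
    using Q2_b e6 x1b X1_pos[of t] by (intro mult_mono) auto
  ultimately show "X2 t \<le> 3" by simp
qed

lemma part2:
  assumes t: "t \<in> {-0.4..0}"
  shows "\<exists>v. (((F ^^ 3) \<circ> segI) has_vector_derivative v) (at t within {-0.4..0}) \<and> \<bar>snd v\<bar> < \<bar>fst v\<bar>"
proof -
  define s0 where "s0 = X0 t / (1 + X0 t)"
  define s1 where "s1 = X1 t / (1 + X1 t)"
  define s2 where "s2 = X2 t / (1 + X2 t)"
  have d0a: "((\<lambda>t. fst (segI t)) has_real_derivative 1) (at t)"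
    unfolding segI_eq by (auto intro!: derivative_eq_intros)
  have d0b: "((\<lambda>t. snd (segI t)) has_real_derivative 2) (at t)"
    unfolding segI_eq by (auto intro!: derivative_eq_intros)
  define da1 where "da1 = -2*1 + s0/3*(4*1+2)"
  define db1 where "db1 = 2 - s0/3*(4*1+2)"
  have d1a: "((\<lambda>t. fst (F (segI t))) has_real_derivative da1) (at t)"
    using F_deriv(1)[OF d0a d0b] unfolding orb0 s0_def da1_def .
  have d1b: "((\<lambda>t. snd (F (segI t))) has_real_derivative db1) (at t)"
    using F_deriv(2)[OF d0a d0b] unfolding orb0 s0_def db1_def .
  define da2 where "da2 = -2*da1 + s1/3*(4*da1+db1)"
  define db2 where "db2 = db1 - s1/3*(4*da1+db1)"
  have d2a: "((\<lambda>t. fst (F (F (segI t)))) has_real_derivative da2) (at t)"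
    using F_deriv(1)[OF d1a d1b] unfolding orb1x s1_def da2_def .
  have d2b: "((\<lambda>t. snd (F (F (segI t)))) has_real_derivative db2) (at t)"
    using F_deriv(2)[OF d1a d1b] unfolding orb1x s1_def db2_def .
  define da3 where "da3 = -2*da2 + s2/3*(4*da2+db2)"
  define db3 where "db3 = db2 - s2/3*(4*da2+db2)"
  have d3a: "((\<lambda>t. fst (F (F (F (segI t))))) has_real_derivative da3) (at t)"
    using F_deriv(1)[OF d2a d2b] unfolding orb2x s2_def da3_def .
  have d3b: "((\<lambda>t. snd (F (F (F (segI t))))) has_real_derivative db3) (at t)"
    using F_deriv(2)[OF d2a d2b] unfolding orb2x s2_def db3_def .
  have feq: "(F ^^ 3) \<circ> segI = (\<lambda>t. (fst (F (F (F (segI t)))), snd (F (F (F (segI t))))))"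
    by (rule ext) (simp add: numeral_3_eq_3)
  have vd: "(((F ^^ 3) \<circ> segI) has_vector_derivative (da3, db3)) (at t within {-0.4..0})"
    unfolding feq
    by (rule has_vector_derivative_Pair[OF has_vector_derivative_at_within has_vector_derivative_at_within],
        rule d3a[unfolded has_real_derivative_iff_has_vector_derivative],
        rule d3b[unfolded has_real_derivative_iff_has_vector_derivative])
  have tt: "-0.4 \<le> t" "t \<le> 0" using t by auto
  have s0b: "0 \<le> s0" "s0 < 1" unfolding s0_def using X0_pos[of t] by auto
  have s1b: "0 \<le> s1" "s1 \<le> 1/4" unfolding s1_def using X1_pos[of t] X_small(1)[OF tt]
    by (auto intro!: s_bound)
  have "X2 t / (1 + X2 t) \<le> 3/4" by (rule s_bound) (use X2_pos[of t] X_small(2)[OF tt] in auto)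
  then have s2b: "0 \<le> s2" "s2 \<le> 3/4" unfolding s2_def using X2_pos[of t] by auto
  define AAA :: real where "AAA = -8 + 4* s1 + 6* s2 - 2*(s1* s2)"
  define BBB :: real where "BBB = 2 + 2* s1 - 6* s2 + 2*(s1* s2)"
  have ea: "da3 = (1 - s0) * AAA" unfolding da3_def db2_def da2_def db1_def da1_def AAA_def
    by (simp add: field_simps)
  have eb: "db3 = (1 - s0) * BBB" unfolding db3_def da2_def db2_def db1_def da1_def BBB_def
    by (simp add: field_simps)
  have p: "0 \<le> s1 * s2" using s1b s2b by simp
  have ab1: "BBB < -AAA" unfolding AAA_def BBB_def using s1b by linarith
  have ab2: "-BBB < -AAA" unfolding AAA_def BBB_def using s1b s2b p by linarith
  have "\<bar>BBB\<bar> < \<bar>AAA\<bar>" using ab1 ab2 by linarith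
  then have "\<bar>db3\<bar> < \<bar>da3\<bar>" unfolding ea eb abs_mult using s0b by simp
  then show ?thesis using vd by (intro exI[of _ "(da3, db3)"]) simp
qed

theorem lemma1:
  shows "(\<exists>t\<in>{-0.4..0}. (F ^^ 3) (segI t) \<in> graph_inv) \<and>
         (\<forall>t\<in>{-0.4..0}. (F ^^ 3) (segI t) \<in> graph_inv \<longrightarrow>
            (\<exists>v. (((F ^^ 3) \<circ> segI) has_vector_derivative v) (at t within {-0.4..0}) \<and>
                 \<bar>snd v\<bar> < \<bar>fst v\<bar>))"
  using part1 part2 by blast

end
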